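(* Let $(E,\|\cdot\|)$ be a Banach space, let $X$ be a Radon random vector on a probability space $(\Omega,\mathcal A,\mathbb P)$ with values in $E$ and distribution $P$, let $r\in(0,+\infty)$ with $\int_E\|x\|^r\,dP(x)<+\infty$, and let $n\ge 1$. Let $a=(a_1,\ldots,a_n)\in E^n$ be a local minimum of the $L^r$-distortion function $G_{r,n}^P$ (with respect to the product topology on $E^n$) such that, for every $i\in\{1,\ldots,n\}$, $a_i$ is a non-isolated point of $\operatorname{supp}(P)$. (a) The components $a_1,\ldots,a_n$ are pairwise distinct. Moreover, if $r\ge 1$, then, writing $\Gamma=\{a_1,\ldots,a_n\}$, for every $i\in\{1,\ldots,n\}$ and every Borel set $C\subset E$ with $W_{a_i}(\Gamma)\subset C\subset V_{a_i}(\Gamma)$, one has \[ a_i\in\operatorname{argmin}_{y\in E} G_{r,1}^{P(\cdot\mid C)}(y), \] equivalently $\{a_i\}$ is an $L^r$-optimal $1$-quantizer for $P(\cdot\mid C)$. (b) Let $r\ge 1$. Assume that for every $b\in E$ the norm is Gâteaux differentiable at $b-x$ for $P(dx)$-almost every $x\in E\setminus\{b\}$, and, when $r=1$, that $P(\{a_i\})=0$ for every $i$. Then $\Gamma=\{a_1,\ldots,a_n\}$ is an $L^r$-stationary $n$-quantizer for $P$. If, in addition, $E$ is strictly convex, then $\Gamma$ is admissible for $P$.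
   Context: $\operatorname{supp}(P)$ denotes the (topological) support of $P$. For a nonempty finite set $\Gamma\subset E$ and $x\in E$, $d(x,\Gamma)=\min_{b\in\Gamma}\|x-b\|$. The $L^r$-distortion function of level $n$ for a Borel probability $Q$ on $E$ is $G_{r,n}^Q:E^n\to\mathbb R_+$, $G_{r,n}^Q(a_1,\ldots,a_n)=\int_E\min_{1\le i\le n}\|x-a_i\|^r\,dQ(x)$. For a Borel set $C$ with $P(C)>0$, $P(\cdot\mid C)=P(\cdot\cap C)/P(C)$. An $L^r$-optimal $1$-quantizer for $Q$ is a singleton $\{y\}$ minimizing $G^Q_{r,1}$ over $E$. For a finite $\Gamma\subset E$ and $b\in\Gamma$: the closed Voronoi cell is $V_b(\Gamma)=\{x\in E:\|x-b\|=d(x,\Gamma)\}$ and the open Voronoi cell is $W_b(\Gamma)=\{x\in E:\|x-b\|<d(x,\Gamma\setminus\{b\})\}$. A Voronoi partition induced by $\Gamma$ is a Borel partition $\{C_b(\Gamma):b\in\Gamma\}$ of $E$ with $C_b(\Gamma)\subset V_b(\Gamma)$ for all $b$. $\Gamma$ is admissible for $P$ if $P\big(\bigcup_{b\in\Gamma}W_b(\Gamma)\big)=1$. The norm is Gâteaux differentiable at $x\ne0$ if there is $\nabla\|\cdot\|(x)\in E^*$ with $\lim_{t\to0}(\|x+ty\|-\|x\|)/t=\langle\nabla\|\cdot\|(x),y\rangle$ for all $y\in E$. Assume $r\ge1$, $\int\|x\|^r dP<\infty$, and that for every $b\in E$ the norm is Gâteaux differentiable at $b-x$ for $P(dx)$-a.e.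 $x\in E\setminus\{b\}$. A set $\Gamma\subset E$ with $\operatorname{card}(\Gamma)=n$ (and $P(\Gamma)=0$ if $r=1$) is an $L^r$-stationary $n$-quantizer for $P$ if there exists a Voronoi partition $\{C_b(\Gamma):b\in\Gamma\}$ induced by $\Gamma$ such that, for every $b\in\Gamma$, $P(C_b(\Gamma))>0$ and \[ \mathbb E\big[\mathbf 1_{C_b(\Gamma)\setminus\{b\}}(X)\,\|X-b\|^{r-1}\,\nabla\|\cdot\|(b-X)\big]=0\quad\text{in }E^*, \] the expectation being a Gelfand integral. *)

theory Defs
  imports "HOL-Probability.Probability"
begin

definition radon_prob :: "'a::metric_space measure \<Rightarrow> bool" where
  "radon_prob P \<longleftrightarrow> prob_space P \<and> sets P = sets borel \<and>
     (\<forall>A\<in>sets borel. emeasure P A = (SUP K\<in>{K. compact K \<and> K \<subseteq> A}. emeasure P K))"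

definition supp :: "'a::topological_space measure \<Rightarrow> 'a set" where
  "supp P = {x. \<forall>U. open U \<and> x \<in> U \<longrightarrow> emeasure P U > 0}"

text \<open>L^r distortion function of level n; a point of E^n is a function on {..<n}.\<close>
definition distortion :: "real \<Rightarrow> nat \<Rightarrow> 'a::real_normed_vector measure \<Rightarrow> (nat \<Rightarrow> 'a) \<Rightarrow> real" where
  "distortion r n Q a = (\<integral>x. Min ((\<lambda>i. norm (x - a i) powr r) ` {..<n}) \<partial>Q)"

definition cond_measure :: "'a measure \<Rightarrow> 'a set \<Rightarrow> 'a measure" where
  "cond_measure P C = density P (\<lambda>x. ennreal (indicator C x / measure P C))"

definition voronoi_closed :: "'a::real_normed_vector \<Rightarrow> 'a set \<Rightarrow> 'a set" where
  "voronoi_closed b \<Gamma> = {x. \<forall>c\<in>\<Gamma>. norm (x - b) \<le> norm (x - c)}"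

definition voronoi_open :: "'a::real_normed_vector \<Rightarrow> 'a set \<Rightarrow> 'a set" where
  "voronoi_open b \<Gamma> = {x. \<forall>c\<in>\<Gamma> - {b}. norm (x - b) < norm (x - c)}"

definition voronoi_partition :: "'a::real_normed_vector set \<Rightarrow> ('a \<Rightarrow> 'a set) \<Rightarrow> bool" where
  "voronoi_partition \<Gamma> C \<longleftrightarrow>
     (\<forall>b\<in>\<Gamma>. C b \<in> sets borel \<and> C b \<subseteq> voronoi_closed b \<Gamma>) \<and>
     (\<forall>b\<in>\<Gamma>. \<forall>c\<in>\<Gamma>. b \<noteq> c \<longrightarrow> C b \<inter> C c = {}) \<and>
     (\<Union>b\<in>\<Gamma>. C b) = UNIV"

definition admissible :: "'a::real_normed_vector measure \<Rightarrow> 'a set \<Rightarrow> bool" where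
  "admissible P \<Gamma> \<longleftrightarrow> measure P (\<Union>b\<in>\<Gamma>. voronoi_open b \<Gamma>) = 1"

definition norm_gateaux_deriv :: "'a::real_normed_vector \<Rightarrow> ('a \<Rightarrow> real) \<Rightarrow> bool" where
  "norm_gateaux_deriv x \<phi> \<longleftrightarrow> bounded_linear \<phi> \<and>
     (\<forall>y. ((\<lambda>t. (norm (x + t *\<^sub>R y) - norm x) / t) \<longlongrightarrow> \<phi> y) (at 0))"

definition norm_gateaux_differentiable :: "'a::real_normed_vector \<Rightarrow> bool" where
  "norm_gateaux_differentiable x \<longleftrightarrow> (\<exists>\<phi>. norm_gateaux_deriv x \<phi>)"

definition norm_grad :: "'a::real_normed_vector \<Rightarrow> 'a \<Rightarrow> real" where
  "norm_grad x = (SOME \<phi>. norm_gateaux_deriv x \<phi>)"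

text \<open>L^r-stationary n-quantizer; the Gelfand integral in E* vanishes iff its pairing with
  every y in E vanishes, i.e. every scalar integral (w.r.t. the completion of P) is 0.\<close>
definition stationary_quantizer :: "'a::real_normed_vector measure \<Rightarrow> real \<Rightarrow> nat \<Rightarrow> 'a set \<Rightarrow> bool" where
  "stationary_quantizer P r n \<Gamma> \<longleftrightarrow> finite \<Gamma> \<and> card \<Gamma> = n \<and>
     (r = 1 \<longrightarrow> measure P \<Gamma> = 0) \<and>
     (\<exists>C. voronoi_partition \<Gamma> C \<and>
        (\<forall>b\<in>\<Gamma>. measure P (C b) > 0 \<and>
           (\<forall>y. integrable (completion P)
                   (\<lambda>x. indicator (C b - {b}) x * norm (x - b) powr (r - 1) * norm_grad (b - x) y)
              \<and> (\<integral>x. indicator (C b - {b}) x * norm (x - b) powr (r - 1) * norm_grad (b - x) y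
                   \<partial>completion P) = 0)))"

definition strictly_convex_norm :: "'a::real_normed_vector itself \<Rightarrow> bool" where
  "strictly_convex_norm _ \<longleftrightarrow>
     (\<forall>x y::'a. norm x = 1 \<and> norm y = 1 \<and> x \<noteq> y \<longrightarrow> norm ((1/2) *\<^sub>R (x + y)) < 1)"

end

theory Submission
  imports Defs
begin


lemma powr_tangent:
  fixes r s s0 :: real
  assumes r: "r \<ge> 1" and s: "s \<ge> 0" and s0: "s0 \<ge> 0"
  shows "s0 powr r + r * s0 powr (r-1) * (s - s0) \<le> s powr r"
proof (cases "s0 = 0")
  case True then show ?thesis using r by simp
next
  case False
  then have s0p: "s0 > 0" using s0 by simp
  show ?thesis
  proof (cases "s = 0")
    case True
    have "s0 powr r = s0 powr (r-1) * s0" using s0p by (simp add: powr_diff)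
    then have "s0 powr r + r * s0 powr (r-1) * (s - s0) = (1 - r) * s0 powr r" using True by (simp add: algebra_simps)
    also have "\<dots> \<le> 0" using r by (simp add: mult_nonpos_nonneg)
    finally show ?thesis using True by simp
  next
    case False
    then have sp: "s > 0" using s by simp
    have d: "((\<lambda>x. x powr r) has_field_derivative r * s0 powr (r-1)) (at s0 within {0<..})"
      using s0p by (auto intro!: derivative_eq_intros)
    have "s powr r - s0 powr r \<ge> r * s0 powr (r-1) * (s - s0)"
      by (rule convex_on_imp_above_tangent[OF powr_convex[OF r] _ _ _ d]) (use sp s0p in \<open>auto simp: interior_open\<close>)
    then show ?thesis by simp
  qed
qed

lemma powr_diff_bound:
  fixes r s1 s2 :: real
  assumes r: "r \<ge> 1" and s1: "s1 \<ge> 0" and s2: "s2 \<ge> 0"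
  shows "\<bar>s1 powr r - s2 powr r\<bar> \<le> r * (max s1 s2) powr (r-1) * \<bar>s1 - s2\<bar>"
proof -
  have *: "\<bar>p powr r - q powr r\<bar> \<le> r * (max p q) powr (r-1) * \<bar>p - q\<bar>" if "q \<le> p" "q \<ge> 0" for p q :: real
  proof -
    have "p powr r + r * p powr (r-1) * (q - p) \<le> q powr r"
      using powr_tangent[OF r, of q p] that by simp
    moreover have "q powr r \<le> p powr r" using that r by (intro powr_mono2) auto
    ultimately show ?thesis using that by (simp add: max_def algebra_simps)
  qed
  show ?thesis
  proof (cases "s2 \<le> s1")
    case True then show ?thesis using *[of s2 s1] s2 by simp
  next
    case False then show ?thesis using *[of s1 s2] s1 by (simp add: max.commute abs_minus_commute)
  qed
qed

lemma powr_convex_comb: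
  fixes r p q t :: real
  assumes r: "r \<ge> 1" and p: "p \<ge> 0" and q: "q \<ge> 0" and t: "0 \<le> t" "t \<le> 1"
  shows "((1-t)*p + t*q) powr r \<le> (1-t) * p powr r + t * q powr r"
proof -
  define m where "m = (1-t)*p + t*q"
  have m: "m \<ge> 0" using p q t unfolding m_def by simp
  define g where "g = r * m powr (r-1)"
  have 1: "m powr r + g * (p - m) \<le> p powr r" using powr_tangent[OF r p m] unfolding g_def by simp
  have 2: "m powr r + g * (q - m) \<le> q powr r" using powr_tangent[OF r q m] unfolding g_def by simp
  have "(1-t) * (m powr r + g * (p - m)) + t * (m powr r + g * (q - m)) \<le> (1-t) * p powr r + t * q powr r"
    using 1 2 t by (intro add_mono mult_left_mono) auto
  moreover have "(1-t) * (m powr r + g * (p - m)) + t * (m powr r + g * (q - m)) = m powr r"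
    unfolding m_def by (simp add: algebra_simps)
  ultimately show ?thesis unfolding m_def by simp
qed

lemma powr_sum_le:
  fixes r p q :: real
  assumes r: "r > 0" and p: "p \<ge> 0" and q: "q \<ge> 0"
  shows "(p+q) powr r \<le> 2 powr r * (p powr r + q powr r)"
proof -
  have "(p+q) powr r \<le> (2 * max p q) powr r" using p q r by (intro powr_mono2) auto
  also have "\<dots> = 2 powr r * (max p q) powr r" using p q by (simp add: powr_mult)
  also have "(max p q) powr r \<le> p powr r + q powr r" by (simp add: max_def)
  then have "2 powr r * (max p q) powr r \<le> 2 powr r * (p powr r + q powr r)" by simp
  finally show ?thesis .
qed

lemma powr_le_one_plus:
  fixes r s :: real
  assumes r: "r \<ge> 1" and s: "s \<ge> 0"
  shows "s powr (r-1) \<le> 1 + s powr r"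
proof (cases "s \<le> 1")
  case True
  then have "s powr (r-1) \<le> 1" using s r by (intro powr_le1) auto
  then show ?thesis by (simp add: add_increasing2)
next
  case False
  then have "s powr (r-1) \<le> s powr r" using r by (intro powr_mono) auto
  then show ?thesis by simp
qed



lemma cont_norm_diff: "(\<lambda>x::'a::real_normed_vector. norm (x - b)) \<in> borel_measurable borel"
  by (intro borel_measurable_continuous_onI continuous_intros)

locale qsetup =
  fixes P :: "'a::banach measure" and r :: real
  assumes sP: "sets P = sets borel" and probP: "prob_space P" and r_pos: "r > 0"
    and moment: "integrable P (\<lambda>x. norm x powr r)"
begin

lemma finP: "finite_measure P" using probP by (simp add: prob_space_def)

lemma spaceP[simp]: "space P = UNIV"
  using sets_eq_imp_space_eq[OF sP] by simp

lemma measP: "f \<in> borel_measurable borel \<Longrightarrow> f \<in> borel_measurable P"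
  by (simp add: measurable_cong_sets[OF sP refl])

lemma setsP: "A \<in> sets borel \<Longrightarrow> A \<in> sets P"
  by (simp add: sP)

lemma meas_nd[measurable]: "(\<lambda>x. norm (x - b)) \<in> borel_measurable P"
  by (rule measP[OF cont_norm_diff])

lemma int_shift:
  assumes K: "K \<ge> 0"
  shows "integrable P (\<lambda>x. (norm (x - b) + K) powr r)"
proof (rule Bochner_Integration.integrable_bound[where f="\<lambda>x. 2 powr r * (norm x powr r + (norm b + K) powr r)"])
  show "integrable P (\<lambda>x. 2 powr r * (norm x powr r + (norm b + K) powr r))"
    using moment finite_measure.integrable_const[OF finP] by (intro integrable_mult_right Bochner_Integration.integrable_add) auto
  show "(\<lambda>x. (norm (x - b) + K) powr r) \<in> borel_measurable P" by measurable
  show "AE x in P. norm ((norm (x - b) + K) powr r) \<le> norm (2 powr r * (norm x powr r + (norm b + K) powr r))"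
  proof (intro AE_I2)
    fix x
    have "(norm (x - b) + K) powr r \<le> (norm x + (norm b + K)) powr r"
      using K r_pos norm_triangle_ineq4[of x b] by (intro powr_mono2) auto
    also have "\<dots> \<le> 2 powr r * (norm x powr r + (norm b + K) powr r)"
      using K r_pos by (intro powr_sum_le) auto
    finally show "norm ((norm (x - b) + K) powr r) \<le> norm (2 powr r * (norm x powr r + (norm b + K) powr r))"
      by simp
  qed
qed

lemma int_nr: "integrable P (\<lambda>x. norm (x - b) powr r)"
  using int_shift[of 0 b] by simp

lemma meas_Min: fixes c :: "nat \<Rightarrow> 'a" shows "(\<lambda>x. Min ((\<lambda>i. norm (x - c i) powr r) ` {..<n})) \<in> borel_measurable P"
  by measurable

lemma int_Min:
  fixes c :: "nat \<Rightarrow> 'a"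
  assumes n: "n \<ge> 1"
  shows "integrable P (\<lambda>x. Min ((\<lambda>i. norm (x - c i) powr r) ` {..<n}))"
proof (rule Bochner_Integration.integrable_bound[OF int_nr[of "c 0"] meas_Min], intro AE_I2)
  fix x
  have "Min ((\<lambda>i. norm (x - c i) powr r) ` {..<n}) \<le> norm (x - c 0) powr r"
    using n by (intro Min_le) auto
  moreover have "Min ((\<lambda>i. norm (x - c i) powr r) ` {..<n}) \<ge> 0"
    using n by (subst Min_ge_iff) (auto simp: lessThan_empty_iff)
  ultimately show "norm (Min ((\<lambda>i. norm (x - c i) powr r) ` {..<n})) \<le> norm (norm (x - c 0) powr r)"
    by simp
qed

end



lemma Min_img_le: "finite I \<Longrightarrow> i \<in> I \<Longrightarrow> Min (f ` I) \<le> (f i :: 'b::linorder)"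
  by (rule Min_le) auto

lemma Min_img_in: "finite I \<Longrightarrow> I \<noteq> {} \<Longrightarrow> \<exists>i\<in>I. Min (f ` I) = (f i :: 'b::linorder)"
proof -
  assume "finite I" "I \<noteq> {}"
  then have "Min (f ` I) \<in> f ` I" by (intro Min_in) auto
  then show ?thesis by auto
qed

lemma vo_eq: "voronoi_open b G = (\<Inter>c\<in>G - {b}. {x. norm (x - b) < norm (x - c)})"
  unfolding voronoi_open_def by auto

lemma vc_eq: "voronoi_closed b G = (\<Inter>c\<in>G. {x. norm (x - b) \<le> norm (x - c)})"
  unfolding voronoi_closed_def by auto

lemma vo_open: "finite G \<Longrightarrow> open (voronoi_open b G)"
  unfolding vo_eq by (intro open_INT ballI open_Collect_less continuous_intros) auto

lemma vc_closed: "closed (voronoi_closed b G)"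
  unfolding vc_eq by (intro closed_INT ballI closed_Collect_le continuous_intros)

lemma self_in_vo: "b \<in> voronoi_open b G"
  unfolding voronoi_open_def by auto

lemma vo_sub_vc: "voronoi_open b G \<subseteq> voronoi_closed b G"
  unfolding voronoi_open_def voronoi_closed_def by (auto intro: less_imp_le)

context qsetup begin

lemma supp_pos: "b \<in> supp P \<Longrightarrow> open U \<Longrightarrow> b \<in> U \<Longrightarrow> emeasure P U > 0"
  unfolding supp_def by auto

lemma inj_from_locmin:
  fixes a :: "nat \<Rightarrow> 'a"
  assumes n: "n \<ge> 1"
    and locmin: "\<exists>e>0. \<forall>c. (\<forall>i<n. dist (c i) (a i) < e) \<longrightarrow> distortion r n P a \<le> distortion r n P c"
    and nonisol: "\<forall>i<n. a i \<in> supp P \<and> a i islimpt supp P"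
  shows "inj_on a {..<n}"
proof (rule ccontr)
  assume "\<not> inj_on a {..<n}"
  then obtain i j where ij: "i < n" "j < n" "i \<noteq> j" "a i = a j" unfolding inj_on_def by auto
  obtain e where e: "e > 0" "\<And>c. (\<forall>i<n. dist (c i) (a i) < e) \<Longrightarrow> distortion r n P a \<le> distortion r n P c"
    using locmin by auto
  let ?G = "a ` {..<n}"
  have "a j islimpt ((supp P \<inter> ?G) \<union> (supp P - ?G))"
    using nonisol ij by (metis Int_Diff_Un)
  then have "a j islimpt (supp P - ?G)"
    by (subst (asm) islimpt_Un_finite) auto
  then obtain z where z: "z \<in> supp P" "z \<notin> ?G" "dist z (a j) < e"
    using e(1) unfolding islimpt_approachable by blast
  define c where "c = a(j := z)"
  have "distortion r n P a \<le> distortion r n P c"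
    using e z(3) unfolding c_def by (intro e(2)) auto
  moreover have "distortion r n P c < distortion r n P a"
  proof -
    define U where "U = (\<Inter>k\<in>{..<n}. {x. norm (x - z) < norm (x - a k)})"
    have Uo: "open U" unfolding U_def by (intro open_INT ballI open_Collect_less continuous_intros) auto
    have zU: "z \<in> U" using z(2) unfolding U_def by auto
    have Upos: "emeasure P U > 0" using supp_pos[OF z(1) Uo zU] .
    have le: "Min ((\<lambda>k. norm (x - c k) powr r) ` {..<n}) \<le> Min ((\<lambda>k. norm (x - a k) powr r) ` {..<n})" for x
    proof -
      obtain m where m: "m < n" "Min ((\<lambda>k. norm (x - a k) powr r) ` {..<n}) = norm (x - a m) powr r"
        using Min_img_in[of "{..<n}" "\<lambda>k. norm (x - a k) powr r"] n by (auto simp: lessThan_empty_iff)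
      show ?thesis
      proof (cases "m = j")
        case True
        have "Min ((\<lambda>k. norm (x - c k) powr r) ` {..<n}) \<le> norm (x - c i) powr r"
          using ij by (intro Min_img_le) auto
        then show ?thesis using m True ij unfolding c_def by auto
      next
        case False
        have "Min ((\<lambda>k. norm (x - c k) powr r) ` {..<n}) \<le> norm (x - c m) powr r"
          using m by (intro Min_img_le) auto
        then show ?thesis using m False unfolding c_def by auto
      qed
    qed
    have lt: "Min ((\<lambda>k. norm (x - c k) powr r) ` {..<n}) < Min ((\<lambda>k. norm (x - a k) powr r) ` {..<n})"
      if "x \<in> U" for x
    proof -
      obtain m where m: "m < n" "Min ((\<lambda>k. norm (x - a k) powr r) ` {..<n}) = norm (x - a m) powr r"
        using Min_img_in[of "{..<n}" "\<lambda>k. norm (x - a k) powr r"] n by (auto simp: lessThan_empty_iff)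
      have "Min ((\<lambda>k. norm (x - c k) powr r) ` {..<n}) \<le> norm (x - c j) powr r"
        using ij by (intro Min_img_le) auto
      also have "\<dots> = norm (x - z) powr r" unfolding c_def by simp
      also have "\<dots> < norm (x - a m) powr r"
        using that m r_pos unfolding U_def by (intro powr_less_mono2) auto
      finally show ?thesis using m by simp
    qed
    show ?thesis unfolding distortion_def
    proof (rule finite_measure.integral_less_AE[OF finP int_Min[OF n] int_Min[OF n], where A=U])
      show "emeasure P U \<noteq> 0" using Upos by simp
      show "U \<in> sets P" using Uo by (intro setsP) auto
      show "AE x in P. x \<in> U \<longrightarrow> Min ((\<lambda>k. norm (x - c k) powr r) ` {..<n}) \<noteq> Min ((\<lambda>k. norm (x - a k) powr r) ` {..<n})"
        using lt by (intro AE_I2) (metis less_irrefl)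
      show "AE x in P. Min ((\<lambda>k. norm (x - c k) powr r) ` {..<n}) \<le> Min ((\<lambda>k. norm (x - a k) powr r) ` {..<n})"
        using le by (intro AE_I2) auto
    qed
  qed
  ultimately show False by simp
qed

end



context qsetup begin

definition hC :: "'a set \<Rightarrow> 'a \<Rightarrow> real" where
  "hC C y = (\<integral>x. indicator C x * norm (x - y) powr r \<partial>P)"

lemma int_ind: fixes f :: "'a \<Rightarrow> real" shows "C \<in> sets borel \<Longrightarrow> integrable P f \<Longrightarrow> integrable P (\<lambda>x. indicator C x * f x)"
  using integrable_real_mult_indicator[of C P f] by (simp add: setsP mult.commute)

lemma int_hC: "C \<in> sets borel \<Longrightarrow> integrable P (\<lambda>x. indicator C x * norm (x - y) powr r)"
  by (intro int_ind int_nr)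

lemma local_cell:
  fixes a :: "nat \<Rightarrow> 'a"
  assumes n: "n \<ge> 1" and i: "i < n" and C: "C \<in> sets borel"
    and WC: "voronoi_open (a i) (a ` {..<n}) \<subseteq> C" and CV: "C \<subseteq> voronoi_closed (a i) (a ` {..<n})"
    and le: "distortion r n P a \<le> distortion r n P (a(i := y))"
  shows "hC C (a i) \<le> hC C y"
proof -
  define c where "c = a(i := y)"
  define Ma where "Ma x = Min ((\<lambda>k. norm (x - a k) powr r) ` {..<n})" for x
  define Mc where "Mc x = Min ((\<lambda>k. norm (x - c k) powr r) ` {..<n})" for x
  have ne: "{..<n} \<noteq> {}" using n by (auto simp: lessThan_empty_iff)
  have 1: "Ma x = indicator C x * norm (x - a i) powr r + indicator (- C) x * Ma x" for x
  proof (cases "x \<in> C")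
    case True
    have "Ma x \<le> norm (x - a i) powr r" unfolding Ma_def using i by (intro Min_img_le) auto
    moreover have "norm (x - a i) powr r \<le> Ma x" unfolding Ma_def
    proof (rule Min.boundedI)
      fix v assume "v \<in> (\<lambda>k. norm (x - a k) powr r) ` {..<n}"
      then obtain k where k: "k < n" "v = norm (x - a k) powr r" by auto
      have "norm (x - a i) \<le> norm (x - a k)" using CV True k unfolding voronoi_closed_def by auto
      then show "norm (x - a i) powr r \<le> v" using k r_pos by (auto intro: powr_mono2)
    qed (use ne in auto)
    ultimately show ?thesis using True by simp
  next
    case False then show ?thesis by simp
  qed
  have 2: "Mc x \<le> indicator C x * norm (x - y) powr r + indicator (- C) x * Ma x" for x
  proof (cases "x \<in> C")
    case True
    have "Mc x \<le> norm (x - c i) powr r" unfolding Mc_def using i by (intro Min_img_le) auto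
    then show ?thesis using True unfolding c_def by simp
  next
    case False
    then have "x \<notin> voronoi_open (a i) (a ` {..<n})" using WC by auto
    then obtain j where j: "j < n" "a j \<noteq> a i" "norm (x - a i) \<ge> norm (x - a j)"
      unfolding voronoi_open_def by (auto simp: not_less)
    obtain m where m: "m < n" "Ma x = norm (x - a m) powr r"
      using Min_img_in[of "{..<n}" "\<lambda>k. norm (x - a k) powr r"] ne unfolding Ma_def by auto
    have "Mc x \<le> Ma x"
    proof (cases "m = i")
      case True
      have "Mc x \<le> norm (x - c j) powr r" unfolding Mc_def using j by (intro Min_img_le) auto
      also have "\<dots> = norm (x - a j) powr r" using j unfolding c_def by auto
      also have "\<dots> \<le> norm (x - a i) powr r" using j r_pos by (intro powr_mono2) auto
      finally show ?thesis using m True by simp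
    next
      case False
      have "Mc x \<le> norm (x - c m) powr r" unfolding Mc_def using m by (intro Min_img_le) auto
      then show ?thesis using m False unfolding c_def by simp
    qed
    then show ?thesis using False by simp
  qed
  have CC: "- C \<in> sets borel" using C by auto
  have iMa: "integrable P Ma" unfolding Ma_def by (rule int_Min[OF n])
  have iMc: "integrable P Mc" unfolding Mc_def by (rule int_Min[OF n])
  have iR: "integrable P (\<lambda>x. indicator (- C) x * Ma x)" by (rule int_ind[OF CC iMa])
  have "integral\<^sup>L P Ma = (\<integral>x. indicator C x * norm (x - a i) powr r + indicator (- C) x * Ma x \<partial>P)"
    by (rule Bochner_Integration.integral_cong[OF refl]) (rule 1)
  also have "\<dots> = hC C (a i) + (\<integral>x. indicator (- C) x * Ma x \<partial>P)"
    unfolding hC_def by (intro Bochner_Integration.integral_add int_hC C iR)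
  finally have e1: "integral\<^sup>L P Ma = hC C (a i) + (\<integral>x. indicator (- C) x * Ma x \<partial>P)" .
  have e2: "integral\<^sup>L P Ma \<le> integral\<^sup>L P Mc"
    using le unfolding distortion_def Ma_def Mc_def c_def by simp
  have "integral\<^sup>L P Mc \<le> (\<integral>x. indicator C x * norm (x - y) powr r + indicator (- C) x * Ma x \<partial>P)"
    using 2 by (intro integral_mono iMc Bochner_Integration.integrable_add int_hC C iR)
  also have "\<dots> = hC C y + (\<integral>x. indicator (- C) x * Ma x \<partial>P)"
    unfolding hC_def by (intro Bochner_Integration.integral_add int_hC C iR)
  finally show ?thesis using e1 e2 by simp
qed

lemma hC_convex:
  assumes r1: "r \<ge> 1" and C: "C \<in> sets borel" and t: "0 \<le> t" "t \<le> 1"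
  shows "hC C ((1-t) *\<^sub>R u + t *\<^sub>R v) \<le> (1-t) * hC C u + t * hC C v"
proof -
  have pt: "indicator C x * norm (x - ((1-t) *\<^sub>R u + t *\<^sub>R v)) powr r
      \<le> (1-t) * (indicator C x * norm (x - u) powr r) + t * (indicator C x * norm (x - v) powr r)" for x
  proof -
    have "x - ((1-t) *\<^sub>R u + t *\<^sub>R v) = (1-t) *\<^sub>R (x - u) + t *\<^sub>R (x - v)"
      by (simp add: algebra_simps)
    then have "norm (x - ((1-t) *\<^sub>R u + t *\<^sub>R v)) \<le> (1-t) * norm (x - u) + t * norm (x - v)"
      using t by (metis abs_of_nonneg diff_ge_0_iff_ge norm_scaleR norm_triangle_ineq)
    then have "norm (x - ((1-t) *\<^sub>R u + t *\<^sub>R v)) powr r \<le> ((1-t) * norm (x - u) + t * norm (x - v)) powr r"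
      using r_pos by (intro powr_mono2) auto
    also have "\<dots> \<le> (1-t) * norm (x - u) powr r + t * norm (x - v) powr r"
      using t r1 by (intro powr_convex_comb) auto
    finally show ?thesis by (simp add: indicator_def)
  qed
  have "hC C ((1-t) *\<^sub>R u + t *\<^sub>R v) \<le> (\<integral>x. (1-t) * (indicator C x * norm (x - u) powr r) + t * (indicator C x * norm (x - v) powr r) \<partial>P)"
    unfolding hC_def using pt by (intro integral_mono int_hC C Bochner_Integration.integrable_add integrable_mult_right)
  also have "\<dots> = (1-t) * hC C u + t * hC C v"
    unfolding hC_def by (simp add: Bochner_Integration.integral_add integrable_mult_right int_hC C)
  finally show ?thesis .
qed

lemma hC_global:
  assumes r1: "r \<ge> 1" and C: "C \<in> sets borel" and e: "e > 0"
    and loc: "\<And>y. dist y b < e \<Longrightarrow> hC C b \<le> hC C y"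
  shows "hC C b \<le> hC C y"
proof (cases "y = b")
  case True then show ?thesis by simp
next
  case False
  then have d: "norm (y - b) > 0" by simp
  define t where "t = min 1 (e / (2 * norm (y - b)))"
  have t: "0 < t" "t \<le> 1" using e d unfolding t_def by auto
  have "dist ((1-t) *\<^sub>R b + t *\<^sub>R y) b = t * norm (y - b)"
    using t by (simp add: dist_norm algebra_simps flip: scaleR_diff_right)
  also have "\<dots> \<le> e / (2 * norm (y - b)) * norm (y - b)" unfolding t_def using d
    by (intro mult_right_mono) auto
  also have "\<dots> < e" using d e by simp
  finally have "hC C b \<le> hC C ((1-t) *\<^sub>R b + t *\<^sub>R y)" by (rule loc)
  also have "\<dots> \<le> (1-t) * hC C b + t * hC C y" using t by (intro hC_convex r1 C) auto
  finally have "t * hC C b \<le> t * hC C y" by (simp add: algebra_simps)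
  then show ?thesis using t by simp
qed

lemma cond_distortion:
  assumes C: "C \<in> sets borel"
  shows "distortion r 1 (cond_measure P C) (\<lambda>_. y) = hC C y / measure P C"
proof -
  have "distortion r 1 (cond_measure P C) (\<lambda>_. y) = (\<integral>x. norm (x - y) powr r \<partial>cond_measure P C)"
    unfolding distortion_def by (simp add: lessThan_Suc)
  also have "\<dots> = (\<integral>x. (indicator C x / measure P C) *\<^sub>R norm (x - y) powr r \<partial>P)"
    unfolding cond_measure_def
  proof (rule integral_density)
    show "(\<lambda>x. norm (x - y) powr r) \<in> borel_measurable P" by measurable
    have [measurable]: "C \<in> sets P" using C setsP by auto
    show "(\<lambda>x. indicator C x / measure P C) \<in> borel_measurable P" by measurable
    show "AE x in P. 0 \<le> indicator C x / measure P C" by (intro AE_I2) auto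
  qed
  also have "\<dots> = (\<integral>x. indicator C x * norm (x - y) powr r / measure P C \<partial>P)"
    by simp
  also have "\<dots> = hC C y / measure P C" unfolding hC_def by simp
  finally show ?thesis .
qed

end



lemma quot_lim:
  fixes u z :: "'a::real_normed_vector"
  assumes u: "u \<noteq> 0" and d: "norm_gateaux_deriv u \<phi>"
  shows "((\<lambda>t. (norm (u + t *\<^sub>R z) powr r - norm u powr r) / t) \<longlongrightarrow> r * norm u powr (r-1) * \<phi> z) (at 0)"
proof -
  have "((\<lambda>t. (norm (u + t *\<^sub>R z) - norm u) / t) \<longlongrightarrow> \<phi> z) (at 0)"
    using d unfolding norm_gateaux_deriv_def by auto
  then have "DERIV (\<lambda>t. norm (u + t *\<^sub>R z)) 0 :> \<phi> z"
    unfolding DERIV_def by simp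
  from DERIV_fun_powr[OF this, of r] u
  have "DERIV (\<lambda>t. norm (u + t *\<^sub>R z) powr r) 0 :> r * norm u powr (r-1) * \<phi> z" by simp
  then show ?thesis unfolding DERIV_def by simp
qed

lemma seq_at0:
  fixes s :: real assumes "s \<noteq> 0"
  shows "filterlim (\<lambda>k. s / real (Suc k)) (at 0) sequentially"
proof -
  have "(\<lambda>k. s * inverse (real (Suc k))) \<longlonglongrightarrow> 0"
    by (intro tendsto_mult_right_zero LIMSEQ_inverse_real_of_nat)
  then show ?thesis using assms unfolding filterlim_at by (simp add: divide_inverse)
qed

lemma gateaux_some: "norm_gateaux_differentiable u \<Longrightarrow> norm_gateaux_deriv u (norm_grad u)"
  unfolding norm_gateaux_differentiable_def norm_grad_def by (metis someI_ex)



context qsetup begin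

lemma stat_cell:
  assumes r1: "r \<ge> 1" and C: "C \<in> sets borel"
    and gmin: "\<And>y. hC C b \<le> hC C y"
    and diff: "AE x in P. x \<noteq> b \<longrightarrow> norm_gateaux_differentiable (b - x)"
    and atom: "r = 1 \<Longrightarrow> measure P {b} = 0"
  shows "integrable (completion P) (\<lambda>x. indicator (C - {b}) x * norm (x - b) powr (r - 1) * norm_grad (b - x) z)
     \<and> (\<integral>x. indicator (C - {b}) x * norm (x - b) powr (r - 1) * norm_grad (b - x) z \<partial>completion P) = 0"
proof -
  define F where "F x = indicator (C - {b}) x * norm (x - b) powr (r - 1) * norm_grad (b - x) z" for x
  define q where "q s k x = indicator C x * (norm (x - (b + (s / real (Suc k)) *\<^sub>R z)) powr r - norm (x - b) powr r) / (r * (s / real (Suc k)))" for s k x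
  define G where "G s x = lim (\<lambda>k. q s k x)" for s x
  define w where "w x = (norm (x - b) + norm z) powr (r - 1) * norm z" for x
  have Cs[measurable]: "C \<in> sets P" using C setsP by auto
  have qm[measurable]: "q s k \<in> borel_measurable P" for s k unfolding q_def by measurable
  have Gm[measurable]: "G s \<in> borel_measurable P" for s unfolding G_def by measurable
  have ae1: "AE x in P. (x \<noteq> b \<longrightarrow> norm_gateaux_differentiable (b - x)) \<and> (r = 1 \<longrightarrow> x \<noteq> b)"
  proof (cases "r = 1")
    case True
    have "{b} \<in> null_sets P"
      using atom[OF True] finite_measure.emeasure_eq_measure[OF finP, of "{b}"] setsP[of "{b}"]
      by (auto simp: null_sets_def)
    from AE_not_in[OF this] diff show ?thesis by eventually_elim (use True in auto)
  next
    case False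
    from diff show ?thesis by eventually_elim (use False in auto)
  qed
  have wint: "integrable P w"
  proof (rule Bochner_Integration.integrable_bound[where f="\<lambda>x. (1 + (norm (x - b) + norm z) powr r) * norm z"])
    show "integrable P (\<lambda>x. (1 + (norm (x - b) + norm z) powr r) * norm z)"
      using finite_measure.integrable_const[OF finP] int_shift[of "norm z" b]
      by (intro integrable_mult_left Bochner_Integration.integrable_add) auto
    show "w \<in> borel_measurable P" unfolding w_def by measurable
    show "AE x in P. norm (w x) \<le> norm ((1 + (norm (x - b) + norm z) powr r) * norm z)"
    proof (intro AE_I2)
      fix x
      have "(norm (x - b) + norm z) powr (r - 1) \<le> 1 + (norm (x - b) + norm z) powr r"
        by (intro powr_le_one_plus r1) auto
      then show "norm (w x) \<le> norm ((1 + (norm (x - b) + norm z) powr r) * norm z)"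
        unfolding w_def by (auto intro: mult_right_mono)
    qed
  qed
  have bound: "norm (q s k x) \<le> w x" if s: "\<bar>s\<bar> = 1" for s k x
  proof -
    define t where "t = s / real (Suc k)"
    have t0: "t \<noteq> 0" and t1: "\<bar>t\<bar> \<le> 1" using s unfolding t_def by (auto simp: abs_div)
    define s1 where "s1 = norm (x - (b + t *\<^sub>R z))"
    define s2 where "s2 = norm (x - b)"
    have d: "\<bar>s1 - s2\<bar> \<le> \<bar>t\<bar> * norm z"
    proof -
      have "\<bar>s1 - s2\<bar> \<le> norm ((x - (b + t *\<^sub>R z)) - (x - b))"
        unfolding s1_def s2_def by (rule norm_triangle_ineq3)
      also have "\<dots> = \<bar>t\<bar> * norm z" by simp
      finally show ?thesis .
    qed
    have m: "max s1 s2 \<le> norm (x - b) + norm z"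
    proof -
      have "s1 \<le> s2 + \<bar>t\<bar> * norm z" using d by linarith
      also have "\<bar>t\<bar> * norm z \<le> norm z" using t1 by (simp add: mult_left_le_one_le)
      finally show ?thesis unfolding s2_def by auto
    qed
    have "\<bar>s1 powr r - s2 powr r\<bar> \<le> r * (max s1 s2) powr (r-1) * \<bar>s1 - s2\<bar>"
      unfolding s1_def s2_def by (intro powr_diff_bound r1) auto
    also have "\<dots> \<le> r * (norm (x - b) + norm z) powr (r-1) * (\<bar>t\<bar> * norm z)"
      using m d r1 by (intro mult_mono mult_left_mono powr_mono2) (auto simp: s1_def s2_def le_max_iff_disj)
    finally have A: "\<bar>s1 powr r - s2 powr r\<bar> \<le> (r * \<bar>t\<bar>) * w x" unfolding w_def by (simp add: ac_simps)
    have "norm (q s k x) = indicator C x * \<bar>s1 powr r - s2 powr r\<bar> / (r * \<bar>t\<bar>)"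
      unfolding q_def t_def[symmetric] s1_def s2_def using r1 by (simp add: abs_mult indicator_def)
    also have "\<dots> \<le> \<bar>s1 powr r - s2 powr r\<bar> / (r * \<bar>t\<bar>)"
      using r1 t0 by (intro divide_right_mono) (auto simp: indicator_def)
    also have "\<dots> \<le> w x" using A r1 t0 by (simp add: divide_le_eq mult_ac)
    finally show ?thesis .
  qed
  have conv: "AE x in P. (\<lambda>k. q s k x) \<longlonglongrightarrow> F x" if s: "\<bar>s\<bar> = 1" for s
    using ae1
  proof eventually_elim
    case (elim x)
    have s0: "s \<noteq> 0" using s by auto
    show ?case
    proof (cases "x \<in> C")
      case False then show ?thesis unfolding q_def F_def by simp
    next
      case xC: True
      show ?thesis
      proof (cases "x = b")
        case True
        then have r1': "r > 1" using elim r1 by auto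
        have F0: "F x = 0" unfolding F_def using True by simp
        have "(\<lambda>k. q s k x) \<longlonglongrightarrow> 0"
        proof (rule Lim_null_comparison)
          show "\<forall>\<^sub>F k in sequentially. norm (q s k x) \<le> inverse (real (Suc k)) powr (r - 1) * (norm z powr r / r)"
          proof (intro always_eventually allI)
            fix k
            define t where "t = s / real (Suc k)"
            have at: "\<bar>t\<bar> = inverse (real (Suc k))" using s unfolding t_def by (simp add: abs_div divide_inverse abs_mult)
            have at0: "\<bar>t\<bar> > 0" using at by simp
            have "norm (q s k x) = (\<bar>t\<bar> * norm z) powr r / (r * \<bar>t\<bar>)"
              unfolding q_def t_def[symmetric] using True xC r1 by (simp add: abs_mult)
            also have "(\<bar>t\<bar> * norm z) powr r = \<bar>t\<bar> powr (r - 1) * \<bar>t\<bar> * norm z powr r"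
              using at0 by (simp add: powr_mult powr_diff)
            finally show "norm (q s k x) \<le> inverse (real (Suc k)) powr (r - 1) * (norm z powr r / r)"
              using at0 r1 by (simp add: at)
          qed
          have "(\<lambda>k. inverse (real (Suc k)) powr (r - 1)) \<longlonglongrightarrow> 0"
            using r1' by (intro tendsto_zero_powrI LIMSEQ_inverse_real_of_nat) auto
          then show "(\<lambda>k. inverse (real (Suc k)) powr (r - 1) * (norm z powr r / r)) \<longlonglongrightarrow> 0"
            by (rule tendsto_mult_left_zero)
        qed
        then show ?thesis using F0 by simp
      next
        case False
        define u where "u = b - x"
        have u0: "u \<noteq> 0" using False unfolding u_def by simp
        have dd: "norm_gateaux_deriv u (norm_grad u)" using elim False unfolding u_def by (intro gateaux_some) auto
        have L: "((\<lambda>t. (norm (u + t *\<^sub>R z) powr r - norm u powr r) / t) \<longlongrightarrow> r * norm u powr (r-1) * norm_grad u z) (at 0)"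
          by (rule quot_lim[OF u0 dd])
        have "(\<lambda>k. (norm (u + (s / real (Suc k)) *\<^sub>R z) powr r - norm u powr r) / (s / real (Suc k))) \<longlonglongrightarrow> r * norm u powr (r-1) * norm_grad u z"
          using filterlim_compose[OF L seq_at0[OF s0]] by simp
        then have "(\<lambda>k. (norm (u + (s / real (Suc k)) *\<^sub>R z) powr r - norm u powr r) / (s / real (Suc k)) / r) \<longlonglongrightarrow> r * norm u powr (r-1) * norm_grad u z / r"
          using r1 by (intro tendsto_divide tendsto_const) auto
        moreover have "(norm (u + (s / real (Suc k)) *\<^sub>R z) powr r - norm u powr r) / (s / real (Suc k)) / r = q s k x" for k
        proof -
          have "norm (u + (s / real (Suc k)) *\<^sub>R z) = norm (x - (b + (s / real (Suc k)) *\<^sub>R z))"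
          proof -
            have "x - (b + (s / real (Suc k)) *\<^sub>R z) = - (u + (s / real (Suc k)) *\<^sub>R z)"
              unfolding u_def by (simp add: algebra_simps)
            then show ?thesis by (metis norm_minus_cancel)
          qed
          moreover have "norm u = norm (x - b)" unfolding u_def by (rule norm_minus_commute)
          ultimately show ?thesis unfolding q_def using xC by simp
        qed
        moreover have "r * norm u powr (r-1) * norm_grad u z / r = F x"
          unfolding F_def u_def using xC False r1 by (simp add: norm_minus_commute)
        ultimately show ?thesis by simp
      qed
    qed
  qed
  have intq: "integral\<^sup>L P (q s k) = (hC C (b + (s / real (Suc k)) *\<^sub>R z) - hC C b) / (r * (s / real (Suc k)))" for s k
  proof -
    have "integral\<^sup>L P (q s k) = (\<integral>x. (indicator C x * norm (x - (b + (s / real (Suc k)) *\<^sub>R z)) powr r - indicator C x * norm (x - b) powr r) / (r * (s / real (Suc k))) \<partial>P)"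
      unfolding q_def by (simp add: right_diff_distrib)
    also have "\<dots> = (hC C (b + (s / real (Suc k)) *\<^sub>R z) - hC C b) / (r * (s / real (Suc k)))"
      unfolding hC_def by (simp add: Bochner_Integration.integral_diff int_hC C)
    finally show ?thesis .
  qed
  have GF: "AE x in P. G s x = F x" if s: "\<bar>s\<bar> = 1" for s
    using conv[OF s] by eventually_elim (simp add: G_def limI)
  have lim: "(\<lambda>k. integral\<^sup>L P (q s k)) \<longlonglongrightarrow> integral\<^sup>L P (G s)" and iG: "integrable P (G s)"
    if s: "\<bar>s\<bar> = 1" for s
  proof -
    have "AE x in P. (\<lambda>k. q s k x) \<longlonglongrightarrow> G s x" using conv[OF s] GF[OF s] by eventually_elim simp
    then show "(\<lambda>k. integral\<^sup>L P (q s k)) \<longlonglongrightarrow> integral\<^sup>L P (G s)" "integrable P (G s)"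
      using bound[OF s] by (auto intro!: integral_dominated_convergence[OF Gm qm wint] integrable_dominated_convergence[OF Gm qm wint])
  qed
  have pos: "integral\<^sup>L P (G 1) \<ge> 0"
  proof (rule LIMSEQ_le_const[OF lim[of 1]])
    show "\<exists>N. \<forall>k\<ge>N. 0 \<le> integral\<^sup>L P (q 1 k)"
      using gmin[of "b + (1 / real (Suc k)) *\<^sub>R z" for k] r1 unfolding intq
      by (intro exI[of _ 0] allI impI divide_nonneg_pos) auto
  qed simp
  have neg: "integral\<^sup>L P (G (-1)) \<le> 0"
  proof (rule LIMSEQ_le_const2[OF lim[of "-1"]])
    show "\<exists>N. \<forall>k\<ge>N. integral\<^sup>L P (q (-1) k) \<le> 0"
      using gmin[of "b + (-1 / real (Suc k)) *\<^sub>R z" for k] r1 unfolding intq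
      by (intro exI[of _ 0] allI impI divide_nonneg_neg) auto
  qed simp
  have eq: "integral\<^sup>L P (G 1) = integral\<^sup>L P (G (-1))"
    using GF[of 1] GF[of "-1"] by (intro integral_cong_AE Gm) (auto elim: AE_mp)
  have IG0: "integral\<^sup>L P (G 1) = 0" using pos neg eq by simp
  have GFc: "AE x in completion P. G 1 x = F x" using GF[of 1] by (intro AE_completion) simp
  have Fm: "F \<in> borel_measurable (completion P)"
  proof (rule borel_measurableI)
    fix S :: "real set" assume "open S"
    have "G 1 -` S \<inter> space (completion P) \<in> sets (completion P)"
    proof -
      have "G 1 -` S \<inter> space P \<in> sets P"
        by (rule measurable_sets[OF Gm]) (simp add: \<open>open S\<close> borel_open)
      then show ?thesis by simp
    qed
    then show "F -` S \<inter> space (completion P) \<in> sets (completion P)"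
      by (rule completion.in_sets_AE[rotated]) (use GFc in \<open>auto elim!: AE_mp\<close>)
  qed
  have Gmc: "G 1 \<in> borel_measurable (completion P)" by (rule measurable_completion[OF Gm])
  have "integrable (completion P) (G 1)" using iG[of 1] by (subst integrable_completion[OF Gm]) simp
  then have iF: "integrable (completion P) F" by (rule integrable_cong_AE_imp[OF _ Fm GFc])
  have "integral\<^sup>L (completion P) F = integral\<^sup>L (completion P) (G 1)"
    using GFc by (intro integral_cong_AE Fm Gmc) (auto elim: AE_mp)
  also have "\<dots> = integral\<^sup>L P (G 1)" by (rule integral_completion[OF Gm])
  finally show ?thesis using iF IG0 unfolding F_def by simp
qed

end



lemma grad_self:
  fixes u :: "'a::real_normed_vector"
  assumes d: "norm_gateaux_deriv u \<phi>"
  shows "\<phi> u = norm u"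
proof -
  have L: "((\<lambda>t. (norm (u + t *\<^sub>R u) - norm u) / t) \<longlongrightarrow> \<phi> u) (at 0)"
    using d unfolding norm_gateaux_deriv_def by auto
  have pt: "(norm (u + t *\<^sub>R u) - norm u) / t = norm u" if t: "t \<noteq> 0" "dist t 0 < 1" for t :: real
  proof -
    have "u + t *\<^sub>R u = (1 + t) *\<^sub>R u" by (simp add: algebra_simps)
    moreover have "\<bar>1 + t\<bar> = 1 + t" using t by (auto simp: dist_real_def)
    ultimately have "norm (u + t *\<^sub>R u) = (1 + t) * norm u" by simp
    then show ?thesis using t by (simp add: algebra_simps)
  qed
  have "eventually (\<lambda>t. (norm (u + t *\<^sub>R u) - norm u) / t = norm u) (at (0::real))"
    unfolding eventually_at using pt by (intro exI[of _ 1]) auto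
  then have "((\<lambda>t. (norm (u + t *\<^sub>R u) - norm u) / t) \<longlongrightarrow> norm u) (at 0)"
    by (rule tendsto_eventually[THEN tendsto_cong[THEN iffD1, rotated]]) (simp add: eventually_mono)
  then show ?thesis using L by (intro tendsto_unique[of "at (0::real)"]) auto
qed

lemma grad_le:
  fixes u :: "'a::real_normed_vector"
  assumes d: "norm_gateaux_deriv u \<phi>"
  shows "\<phi> w \<le> norm w"
proof -
  have L: "((\<lambda>t. (norm (u + t *\<^sub>R w) - norm u) / t) \<longlongrightarrow> \<phi> w) (at 0)"
    using d unfolding norm_gateaux_deriv_def by auto
  then have L': "((\<lambda>t. (norm (u + t *\<^sub>R w) - norm u) / t) \<longlongrightarrow> \<phi> w) (at_right 0)"
    by (rule filterlim_within_subset) auto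
  show ?thesis
  proof (rule tendsto_upperbound[OF L'])
    show "\<forall>\<^sub>F t in at_right 0. (norm (u + t *\<^sub>R w) - norm u) / t \<le> norm w"
      unfolding eventually_at_right_field
    proof (intro exI[of _ 1] conjI allI impI)
      fix t :: real assume t: "t > 0" "t < 1"
      have "norm (u + t *\<^sub>R w) - norm u \<le> norm (t *\<^sub>R w)" using norm_triangle_ineq[of u "t *\<^sub>R w"] by simp
      also have "\<dots> = t * norm w" using t by simp
      finally show "(norm (u + t *\<^sub>R w) - norm u) / t \<le> norm w" using t by (simp add: divide_le_eq mult.commute)
    qed simp
  qed simp
qed

lemma strict_pos:
  fixes u v :: "'a::real_normed_vector"
  assumes sc: "strictly_convex_norm TYPE('a)" and d: "norm_gateaux_deriv u \<phi>"
    and nn: "norm u = norm v" and uv: "u \<noteq> v" and u0: "u \<noteq> 0"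
  shows "\<phi> v < norm u"
proof (rule ccontr)
  assume "\<not> \<phi> v < norm u"
  moreover have "\<phi> v \<le> norm v" by (rule grad_le[OF d])
  ultimately have pv: "\<phi> v = norm u" using nn by simp
  have bl: "bounded_linear \<phi>" using d unfolding norm_gateaux_deriv_def by auto
  have "\<phi> ((1/2) *\<^sub>R (u + v)) = (1/2) * (\<phi> u + \<phi> v)"
    using bl[THEN bounded_linear.linear] by (simp add: linear_add linear_scale)
  also have "\<dots> = norm u" using pv grad_self[OF d] by simp
  finally have ge: "norm u \<le> norm ((1/2) *\<^sub>R (u + v))" using grad_le[OF d, of "(1/2) *\<^sub>R (u + v)"] by simp
  define c where "c = norm u"
  have c0: "c > 0" using u0 unfolding c_def by simp
  have "norm ((1/2) *\<^sub>R ((1/c) *\<^sub>R u + (1/c) *\<^sub>R v)) < 1"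
    using sc unfolding strictly_convex_norm_def
    using c0 uv nn by (auto simp: c_def)
  moreover have "(1/2) *\<^sub>R ((1/c) *\<^sub>R u + (1/c) *\<^sub>R v) = (1/c) *\<^sub>R ((1/2) *\<^sub>R (u + v))"
    by (simp add: algebra_simps)
  ultimately have "norm ((1/2) *\<^sub>R (u + v)) / c < 1" using c0 by simp
  then have "norm ((1/2) *\<^sub>R (u + v)) < c" using c0 by (simp add: divide_less_eq)
  then show False using ge unfolding c_def by simp
qed



context qsetup begin

lemma admissible_lemma:
  fixes a :: "nat \<Rightarrow> 'a"
  assumes n: "n \<ge> 1" and r1: "r \<ge> 1" and sc: "strictly_convex_norm TYPE('a)"
    and diff: "\<forall>b. AE x in P. x \<noteq> b \<longrightarrow> norm_gateaux_differentiable (b - x)"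
    and stat: "\<And>i C z. i < n \<Longrightarrow> C \<in> sets borel \<Longrightarrow> voronoi_open (a i) (a ` {..<n}) \<subseteq> C \<Longrightarrow>
        C \<subseteq> voronoi_closed (a i) (a ` {..<n}) \<Longrightarrow>
        integrable (completion P) (\<lambda>x. indicator (C - {a i}) x * norm (x - a i) powr (r - 1) * norm_grad (a i - x) z)
        \<and> (\<integral>x. indicator (C - {a i}) x * norm (x - a i) powr (r - 1) * norm_grad (a i - x) z \<partial>completion P) = 0"
  shows "admissible P (a ` {..<n})"
proof -
  define \<Gamma> where "\<Gamma> = a ` {..<n}"
  define W where "W i = voronoi_open (a i) \<Gamma>" for i
  define V where "V i = voronoi_closed (a i) \<Gamma>" for i
  have fin: "finite \<Gamma>" unfolding \<Gamma>_def by simp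
  have Wb: "W i \<in> sets borel" for i unfolding W_def using vo_open[OF fin] by (intro borel_open)
  have Vb: "V i \<in> sets borel" for i unfolding V_def using vc_closed by (intro borel_closed)
  have Dnull: "measure P (V i \<inter> V j) = 0" if ij: "i < n" "j < n" "a i \<noteq> a j" for i j
  proof -
    define b where "b = a i"
    define z where "z = a i - a j"
    define D where "D = V i \<inter> V j"
    have DW: "x \<notin> W i" if "x \<in> D" for x
    proof
      assume "x \<in> W i"
      then have "norm (x - a i) < norm (x - a j)" using ij unfolding W_def voronoi_open_def \<Gamma>_def by auto
      moreover have "norm (x - a j) \<le> norm (x - a i)" using \<open>x \<in> D\<close> ij unfolding D_def V_def voronoi_closed_def \<Gamma>_def by auto
      ultimately show False by simp
    qed
    have bW: "b \<in> W i" unfolding b_def W_def by (rule self_in_vo)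
    have Db: "D \<in> sets borel" unfolding D_def using Vb by auto
    define H where "H C x = indicator (C - {b}) x * norm (x - b) powr (r - 1) * norm_grad (b - x) z" for C x
    define g where "g x = indicator D x * norm (x - b) powr (r - 1) * norm_grad (b - x) z" for x
    have WV: "W i \<subseteq> V i" unfolding W_def V_def by (rule vo_sub_vc)
    have s1: "integrable (completion P) (H (W i \<union> D)) \<and> integral\<^sup>L (completion P) (H (W i \<union> D)) = 0"
      unfolding H_def b_def using WV Wb Db ij unfolding W_def V_def D_def \<Gamma>_def
      by (intro stat) auto
    have s2: "integrable (completion P) (H (W i)) \<and> integral\<^sup>L (completion P) (H (W i)) = 0"
      unfolding H_def b_def using WV Wb Db ij unfolding W_def V_def D_def \<Gamma>_def
      by (intro stat) auto
    have geq: "g x = H (W i \<union> D) x - H (W i) x" for x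
    proof (cases "x \<in> D")
      case True
      then have "x \<notin> W i" "x \<noteq> b" using DW bW by auto
      then show ?thesis using True unfolding g_def H_def by simp
    next
      case False
      then show ?thesis unfolding g_def H_def by (simp add: indicator_def)
    qed
    have ig: "integrable (completion P) g" unfolding geq[abs_def] using s1 s2 by auto
    have g0: "integral\<^sup>L (completion P) g = 0" unfolding geq[abs_def] using s1 s2 by simp
    have pos: "AE x in completion P. 0 \<le> g x \<and> (x \<in> D \<longrightarrow> 0 < g x)"
    proof (rule AE_completion)
      from diff[rule_format, of b] show "AE x in P. 0 \<le> g x \<and> (x \<in> D \<longrightarrow> 0 < g x)"
      proof eventually_elim
        case (elim x)
        show ?case
        proof (cases "x \<in> D")
          case False then show ?thesis unfolding g_def by simp
        next
          case True
          then have xb: "x \<noteq> b" using DW bW by auto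
          define u where "u = b - x"
          define v where "v = a j - x"
          have dd: "norm_gateaux_deriv u (norm_grad u)" using elim xb unfolding u_def by (intro gateaux_some) auto
          have "norm (x - a i) \<le> norm (x - a j)" using True ij unfolding D_def V_def voronoi_closed_def \<Gamma>_def by auto
          moreover have "norm (x - a j) \<le> norm (x - a i)" using True ij unfolding D_def V_def voronoi_closed_def \<Gamma>_def by auto
          ultimately have nn: "norm u = norm v" unfolding u_def v_def b_def by (simp add: norm_minus_commute)
          have uv: "u \<noteq> v" using ij unfolding u_def v_def b_def by simp
          have u0: "u \<noteq> 0" using xb unfolding u_def by simp
          have lt: "norm_grad u v < norm u" by (rule strict_pos[OF sc dd nn uv u0])
          have bl: "bounded_linear (norm_grad u)" using dd unfolding norm_gateaux_deriv_def by auto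
          have "z = u - v" unfolding z_def u_def v_def b_def by simp
          then have "norm_grad u z = norm_grad u u - norm_grad u v"
            using bl[THEN bounded_linear.linear] by (simp add: linear_diff)
          also have "norm_grad u u = norm u" by (rule grad_self[OF dd])
          finally have gz: "norm_grad u z > 0" using lt by simp
          have "norm (x - b) powr (r - 1) > 0" using xb by simp
          then have "g x > 0" using gz True unfolding g_def u_def by simp
          then show ?thesis using True by simp
        qed
      qed
    qed
    have "AE x in completion P. g x = 0"
      using integral_nonneg_eq_0_iff_AE[OF ig] pos g0 by (auto elim: AE_mp)
    then have "AE x in completion P. x \<notin> D"
      using pos by eventually_elim auto
    moreover have DP: "D \<in> sets P" using Db setsP by auto
    ultimately have "emeasure (completion P) D = 0"
      by (subst (asm) AE_iff_measurable[of D]) auto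
    then have "emeasure P D = 0" using DP by simp
    then show ?thesis unfolding D_def measure_def by simp
  qed
  define I where "I = {(i, j). i < n \<and> j < n \<and> a i \<noteq> a j}"
  define N where "N = UNIV - (\<Union>b\<in>\<Gamma>. voronoi_open b \<Gamma>)"
  have finI: "finite I" unfolding I_def by (rule finite_subset[of _ "{..<n} \<times> {..<n}"]) auto
  have cover: "N \<subseteq> (\<Union>p\<in>I. V (fst p) \<inter> V (snd p))"
  proof
    fix x assume "x \<in> N"
    obtain i where i: "i < n" "Min ((\<lambda>k. norm (x - a k)) ` {..<n}) = norm (x - a i)"
      using Min_img_in[of "{..<n}" "\<lambda>k. norm (x - a k)"] n by (auto simp: lessThan_empty_iff)
    have xi: "norm (x - a i) \<le> norm (x - a k)" if "k < n" for k
      using i Min_img_le[of "{..<n}" k "\<lambda>k. norm (x - a k)"] that by simp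
    have "x \<notin> voronoi_open (a i) \<Gamma>" using \<open>x \<in> N\<close> i unfolding N_def \<Gamma>_def by auto
    then obtain j where j: "j < n" "a j \<noteq> a i" "norm (x - a j) \<le> norm (x - a i)"
      unfolding voronoi_open_def \<Gamma>_def by (auto simp: not_less)
    have "x \<in> V i" using xi unfolding V_def voronoi_closed_def \<Gamma>_def by auto
    moreover have "x \<in> V j" using xi j unfolding V_def voronoi_closed_def \<Gamma>_def by (auto intro: order_trans)
    moreover have "(i, j) \<in> I" using i j unfolding I_def by auto
    ultimately show "x \<in> (\<Union>p\<in>I. V (fst p) \<inter> V (snd p))" by force
  qed
  have "measure P (\<Union>p\<in>I. V (fst p) \<inter> V (snd p)) \<le> (\<Sum>p\<in>I. measure P (V (fst p) \<inter> V (snd p)))"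
    using Vb setsP by (intro measure_UNION_le finI) auto
  also have "\<dots> = 0" using Dnull unfolding I_def by (intro sum.neutral) auto
  finally have U0: "measure P (\<Union>p\<in>I. V (fst p) \<inter> V (snd p)) = 0" by (simp add: antisym)
  have Ns: "N \<in> sets P" unfolding N_def using vo_open[OF fin] by (intro setsP borel_closed closed_Diff closed_UNIV open_UN) auto
  have "measure P N \<le> measure P (\<Union>p\<in>I. V (fst p) \<inter> V (snd p))"
    using cover Vb setsP finI by (intro finite_measure.finite_measure_mono[OF finP]) auto
  then have N0: "measure P N = 0" using U0 by (simp add: antisym)
  have Us: "(\<Union>b\<in>\<Gamma>. voronoi_open b \<Gamma>) \<in> sets P" using vo_open[OF fin] by (intro setsP borel_open) auto
  have "measure P (space P - (\<Union>b\<in>\<Gamma>. voronoi_open b \<Gamma>)) = 1 - measure P (\<Union>b\<in>\<Gamma>. voronoi_open b \<Gamma>)"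
    using prob_space.prob_compl[OF probP Us] .
  then show ?thesis using N0 unfolding admissible_def N_def \<Gamma>_def by simp
qed

end



theorem theorem2p1:
  fixes P :: "'a::banach measure" and r :: real and n :: nat and a :: "nat \<Rightarrow> 'a"
  assumes radon: "radon_prob P"
    and r_pos: "r > 0"
    and moment: "integrable P (\<lambda>x. norm x powr r)"
    and n_pos: "n \<ge> 1"
    and locmin: "\<exists>e>0. \<forall>c. (\<forall>i<n. dist (c i) (a i) < e) \<longrightarrow>
                   distortion r n P a \<le> distortion r n P c"
    and nonisol: "\<forall>i<n. a i \<in> supp P \<and> a i islimpt supp P"
  shows "(inj_on a {..<n} \<and>
          (r \<ge> 1 \<longrightarrow>
            (\<forall>i<n. \<forall>C\<in>sets borel.
               voronoi_open (a i) (a ` {..<n}) \<subseteq> C \<and> C \<subseteq> voronoi_closed (a i) (a ` {..<n}) \<longrightarrow>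
               (\<forall>y. distortion r 1 (cond_measure P C) (\<lambda>_. a i)
                      \<le> distortion r 1 (cond_measure P C) (\<lambda>_. y)))))
       \<and> (r \<ge> 1 \<longrightarrow>
          (\<forall>b. AE x in P. x \<noteq> b \<longrightarrow> norm_gateaux_differentiable (b - x)) \<longrightarrow>
          (r = 1 \<longrightarrow> (\<forall>i<n. measure P {a i} = 0)) \<longrightarrow>
          stationary_quantizer P r n (a ` {..<n}) \<and>
          (strictly_convex_norm TYPE('a) \<longrightarrow> admissible P (a ` {..<n})))"
proof -
  have rp: "prob_space P" "sets P = sets borel" using radon unfolding radon_prob_def by blast+
  interpret qsetup P r by (rule qsetup.intro[OF rp(2) rp(1) r_pos moment])
  define \<Gamma> where "\<Gamma> = a ` {..<n}"
  define V where "V i = voronoi_closed (a i) \<Gamma>" for i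
  have fin: "finite \<Gamma>" unfolding \<Gamma>_def by simp
  have inj: "inj_on a {..<n}" by (rule inj_from_locmin[OF n_pos locmin nonisol])
  obtain e where e: "e > 0" "\<And>c. (\<forall>i<n. dist (c i) (a i) < e) \<Longrightarrow> distortion r n P a \<le> distortion r n P c"
    using locmin by auto
  have cellopt: "hC C (a i) \<le> hC C y"
    if r1: "r \<ge> 1" and i: "i < n" and C: "C \<in> sets borel"
      and WC: "voronoi_open (a i) \<Gamma> \<subseteq> C" and CV: "C \<subseteq> voronoi_closed (a i) \<Gamma>" for i C y
  proof (rule hC_global[OF r1 C e(1)])
    fix y assume y: "dist y (a i) < e"
    show "hC C (a i) \<le> hC C y"
    proof (rule local_cell[OF n_pos i C])
      show "voronoi_open (a i) (a ` {..<n}) \<subseteq> C" "C \<subseteq> voronoi_closed (a i) (a ` {..<n})"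
        using WC CV unfolding \<Gamma>_def by auto
      show "distortion r n P a \<le> distortion r n P (a(i := y))"
        using y e(1) by (intro e(2)) auto
    qed
  qed
  have partA: "\<forall>i<n. \<forall>C\<in>sets borel.
               voronoi_open (a i) (a ` {..<n}) \<subseteq> C \<and> C \<subseteq> voronoi_closed (a i) (a ` {..<n}) \<longrightarrow>
               (\<forall>y. distortion r 1 (cond_measure P C) (\<lambda>_. a i)
                      \<le> distortion r 1 (cond_measure P C) (\<lambda>_. y))" if r1: "r \<ge> 1"
  proof (intro allI impI ballI)
    fix i C y assume i: "i < n" and C: "C \<in> sets borel"
      and WV: "voronoi_open (a i) (a ` {..<n}) \<subseteq> C \<and> C \<subseteq> voronoi_closed (a i) (a ` {..<n})"
    have "hC C (a i) \<le> hC C y" using cellopt[OF r1 i C] WV unfolding \<Gamma>_def by auto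
    then show "distortion r 1 (cond_measure P C) (\<lambda>_. a i) \<le> distortion r 1 (cond_measure P C) (\<lambda>_. y)"
      unfolding cond_distortion[OF C] by (intro divide_right_mono) auto
  qed
  have partB: "stationary_quantizer P r n \<Gamma> \<and> (strictly_convex_norm TYPE('a) \<longrightarrow> admissible P \<Gamma>)"
    if r1: "r \<ge> 1" and diff: "\<forall>b. AE x in P. x \<noteq> b \<longrightarrow> norm_gateaux_differentiable (b - x)"
      and atom: "r = 1 \<longrightarrow> (\<forall>i<n. measure P {a i} = 0)"
  proof -
    have stat: "integrable (completion P) (\<lambda>x. indicator (C - {a i}) x * norm (x - a i) powr (r - 1) * norm_grad (a i - x) z)
        \<and> (\<integral>x. indicator (C - {a i}) x * norm (x - a i) powr (r - 1) * norm_grad (a i - x) z \<partial>completion P) = 0"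
      if i: "i < n" and C: "C \<in> sets borel" and WC: "voronoi_open (a i) (a ` {..<n}) \<subseteq> C"
        and CV: "C \<subseteq> voronoi_closed (a i) (a ` {..<n})" for i C z
    proof (rule stat_cell[OF r1 C])
      show "hC C (a i) \<le> hC C y" for y using cellopt[OF r1 i C] WC CV unfolding \<Gamma>_def by auto
      show "AE x in P. x \<noteq> a i \<longrightarrow> norm_gateaux_differentiable (a i - x)" using diff by auto
      show "r = 1 \<Longrightarrow> measure P {a i} = 0" using atom i by auto
    qed
    define Cp where "Cp b = (\<Union>i\<in>{i. i < n \<and> a i = b}. V i - (\<Union>j\<in>{..<i}. V j))" for b
    have Vb: "V i \<in> sets borel" for i unfolding V_def using vc_closed by (intro borel_closed)
    have Cpb: "Cp b \<in> sets borel" for b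
      unfolding Cp_def using Vb by (intro sets.finite_UN sets.Diff) auto
    have CpV: "Cp b \<subseteq> voronoi_closed b \<Gamma>" for b unfolding Cp_def V_def by auto
    have Cpdisj: "Cp b \<inter> Cp c = {}" if "b \<noteq> c" for b c
    proof (rule ccontr)
      assume "Cp b \<inter> Cp c \<noteq> {}"
      then obtain x i i' where x: "i < n" "a i = b" "x \<in> V i" "\<forall>j<i. x \<notin> V j"
        "i' < n" "a i' = c" "x \<in> V i'" "\<forall>j<i'. x \<notin> V j"
        unfolding Cp_def by blast
      then have "i = i'" by (metis linorder_neqE_nat)
      then show False using x that by simp
    qed
    have Cpall: "(\<Union>b\<in>\<Gamma>. Cp b) = UNIV"
    proof (intro set_eqI iffI)
      fix x :: 'a
      obtain m where m: "m < n" "Min ((\<lambda>k. norm (x - a k)) ` {..<n}) = norm (x - a m)"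
        using Min_img_in[of "{..<n}" "\<lambda>k. norm (x - a k)"] n_pos by (auto simp: lessThan_empty_iff)
      have "x \<in> V m" unfolding V_def voronoi_closed_def \<Gamma>_def
        using m Min_img_le[of "{..<n}" _ "\<lambda>k. norm (x - a k)"] by auto
      define i where "i = (LEAST i. x \<in> V i)"
      have i1: "x \<in> V i" unfolding i_def by (rule LeastI) (rule \<open>x \<in> V m\<close>)
      have i2: "\<forall>j<i. x \<notin> V j" unfolding i_def using not_less_Least by blast
      have i3: "i \<le> m" unfolding i_def by (rule Least_le) (rule \<open>x \<in> V m\<close>)
      have "i < n" using i3 m(1) by simp
      have "x \<in> Cp (a i)" unfolding Cp_def using i1 i2 \<open>i < n\<close> by blast
      with \<open>i < n\<close> have "x \<in> Cp (a i)" "i < n" by auto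
      then show "x \<in> (\<Union>b\<in>\<Gamma>. Cp b)" unfolding \<Gamma>_def by auto
    qed simp
    have WCp: "voronoi_open (a i) \<Gamma> \<subseteq> Cp (a i)" if i: "i < n" for i
    proof
      fix x assume xW: "x \<in> voronoi_open (a i) \<Gamma>"
      have "x \<in> V i" using xW vo_sub_vc unfolding V_def by auto
      moreover have "x \<notin> V j" if j: "j < i" for j
      proof
        assume "x \<in> V j"
        then have le: "norm (x - a j) \<le> norm (x - a i)" using i unfolding V_def voronoi_closed_def \<Gamma>_def by auto
        show False
        proof (cases "a j = a i")
          case True
          then show False using inj i j unfolding inj_on_def by (metis lessThan_iff less_trans less_irrefl)
        next
          case False
          then have "norm (x - a i) < norm (x - a j)" using xW i j unfolding voronoi_open_def \<Gamma>_def by auto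
          then show False using le by simp
        qed
      qed
      ultimately show "x \<in> Cp (a i)" using i unfolding Cp_def by auto
    qed
    have vp: "voronoi_partition \<Gamma> Cp"
      unfolding voronoi_partition_def using Cpb CpV Cpdisj Cpall by auto
    have SQ: "stationary_quantizer P r n \<Gamma>"
      unfolding stationary_quantizer_def
    proof (intro conjI impI exI[of _ Cp] ballI allI)
      show "finite \<Gamma>" by (rule fin)
      show "card \<Gamma> = n" unfolding \<Gamma>_def using card_image[OF inj] by simp
      show "measure P \<Gamma> = 0" if "r = 1"
      proof -
        have "measure P (\<Union>i\<in>{..<n}. {a i}) \<le> (\<Sum>i<n. measure P {a i})"
          by (intro measure_UNION_le) (auto intro: setsP)
        also have "\<dots> = 0" using atom that by simp
        finally show ?thesis unfolding \<Gamma>_def by (simp add: antisym UNION_singleton_eq_range)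
      qed
      show "voronoi_partition \<Gamma> Cp" by (rule vp)
      fix b assume b: "b \<in> \<Gamma>"
      then obtain i where i: "i < n" "b = a i" unfolding \<Gamma>_def by auto
      have "emeasure P (voronoi_open b \<Gamma>) > 0"
        using nonisol i vo_open[OF fin] self_in_vo by (intro supp_pos) auto
      then have "measure P (voronoi_open b \<Gamma>) > 0"
        using finite_measure.emeasure_eq_measure[OF finP] by simp
      also have "measure P (voronoi_open b \<Gamma>) \<le> measure P (Cp b)"
        using WCp[OF i(1)] i Cpb by (intro finite_measure.finite_measure_mono[OF finP]) (auto intro: setsP)
      finally show "measure P (Cp b) > 0" .
      fix y
      have "voronoi_open (a i) (a ` {..<n}) \<subseteq> Cp (a i)" "Cp (a i) \<subseteq> voronoi_closed (a i) (a ` {..<n})"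
        using WCp[OF i(1)] CpV unfolding \<Gamma>_def by auto
      from stat[OF i(1) Cpb this, of y]
      show "integrable (completion P) (\<lambda>x. indicator (Cp b - {b}) x * norm (x - b) powr (r - 1) * norm_grad (b - x) y)"
        "(\<integral>x. indicator (Cp b - {b}) x * norm (x - b) powr (r - 1) * norm_grad (b - x) y \<partial>completion P) = 0"
        using i by auto
    qed
    have "admissible P \<Gamma>" if sc: "strictly_convex_norm TYPE('a)"
      unfolding \<Gamma>_def by (rule admissible_lemma[OF n_pos r1 sc diff stat])
    then show ?thesis using SQ by auto
  qed
  show ?thesis using inj partA partB unfolding \<Gamma>_def by auto
qed


end
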